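(* Fix $x\in\mathbb{R}^n$ (deterministic) and let $A$ follow the stochastic block model described in the context. Then for every $k\in[K]$, $$\lambda_{\min}\big(\mathbb{E}(H_k)\big)\ \ge\ \min_{k'\in[K]} B_{k',k}(1-B_{k',k})(n_k-1)\,\|x^{(k')}\|_2^2,$$ where the expectation is over $A$.
   Context: Let $n\ge2$, $K\ge1$, $Z\in\{0,1\}^{n\times K}$ a community membership matrix (each row has exactly one $1$), $\psi_i$ the community of node $i$, $n_k=\sum_i Z_{i,k}\ge1$. Stochastic block model: $B\in[0,1]^{K\times K}$ symmetric, $P=ZBZ^\top$; the entries $\{A_{i,j}\}_{i<j}$ are independent Bernoulli$(P_{i,j})$ random variables, $A_{j,i}=A_{i,j}$, and $A_{i,i}=1$ for all $i$ (deterministic self-loops). $*$ is the Hadamard product, $1_n$ the all-ones vector. $M_k=\mathrm{diag}(Z_{\cdot,k})(1_n x^\top * A)Z\in\mathbb{R}^{n\times K}$, $H_k=M_k^\top M_k$, and $x^{(k')}=Z_{\cdot,k'}*x$ (the entries of $x$ in community $k'$, zero elsewhere). $\lambda_{\min}$ denotes smallest eigenvalue. *)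

theory Defs
  imports "HOL-Analysis.Analysis" "HOL-Probability.Probability"
begin

definition memb_mat :: "('n::finite \<Rightarrow> 'k::finite) \<Rightarrow> real^'k^'n" where
  "memb_mat psi = (\<chi> i k. if psi i = k then 1 else 0)"

definition comm_size :: "('n::finite \<Rightarrow> 'k) \<Rightarrow> 'k \<Rightarrow> nat" where
  "comm_size psi k = card {i. psi i = k}"

definition sbm_P :: "('n::finite \<Rightarrow> 'k::finite) \<Rightarrow> real^'k^'k \<Rightarrow> real^'n^'n" where
  "sbm_P psi B = memb_mat psi ** B ** transpose (memb_mat psi)"

definition sbm_edges :: "('n::{finite,linorder} \<Rightarrow> 'k::finite) \<Rightarrow> (real, 'k) vec^'k \<Rightarrow> ('n \<times> 'n \<Rightarrow> bool) pmf" where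
  "sbm_edges psi B = Pi_pmf {(i, j). i < j} False (\<lambda>(i, j). bernoulli_pmf (sbm_P psi B $ i $ j))"

definition adj_of :: "('n::{finite,linorder} \<times> 'n \<Rightarrow> bool) \<Rightarrow> ((real, 'n) vec, 'n) vec" where
  "adj_of e = (\<chi> i j. if i = j then 1 else if i < j then (if e (i, j) then 1 else 0)
                      else (if e (j, i) then 1 else 0))"

definition diag_vec :: "real^'n \<Rightarrow> real^'n^'n" where
  "diag_vec v = (\<chi> i j. if i = j then v $ i else 0)"

definition hadamard :: "real^'m^'n \<Rightarrow> real^'m^'n \<Rightarrow> real^'m^'n" where
  "hadamard U V = (\<chi> i j. U $ i $ j * V $ i $ j)"

definition ones_outer :: "real^'n \<Rightarrow> real^'n^'n" where
  "ones_outer x = (\<chi> i j. x $ j)"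

definition M_mat :: "('n::finite \<Rightarrow> 'k::finite) \<Rightarrow> real^'n \<Rightarrow> real^'n^'n \<Rightarrow> 'k \<Rightarrow> real^'k^'n" where
  "M_mat psi x A k = diag_vec (column k (memb_mat psi)) ** hadamard (ones_outer x) A ** memb_mat psi"

definition H_mat :: "('n::finite \<Rightarrow> 'k::finite) \<Rightarrow> real^'n \<Rightarrow> real^'n^'n \<Rightarrow> 'k \<Rightarrow> real^'k^'k" where
  "H_mat psi x A k = transpose (M_mat psi x A k) ** M_mat psi x A k"

definition mat_expectation :: "'a pmf \<Rightarrow> ('a \<Rightarrow> real^'m^'l) \<Rightarrow> real^'m^'l" where
  "mat_expectation p F = (\<chi> a b. measure_pmf.expectation p (\<lambda>\<omega>. F \<omega> $ a $ b))"

definition is_eigenvalue :: "real^'k^'k \<Rightarrow> real \<Rightarrow> bool" where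
  "is_eigenvalue C \<mu> \<longleftrightarrow> (\<exists>v. v \<noteq> 0 \<and> C *v v = \<mu> *\<^sub>R v)"

definition lambda_min :: "real^'k^'k \<Rightarrow> real" where
  "lambda_min C = Min {\<mu>. is_eigenvalue C \<mu>}"

definition comm_restrict :: "('n::finite \<Rightarrow> 'k) \<Rightarrow> 'k \<Rightarrow> real^'n \<Rightarrow> real^'n" where
  "comm_restrict psi k' x = (\<chi> i. (if psi i = k' then 1 else 0) * x $ i)"

end

theory Submission
  imports Defs
begin


lemma sym_inner:
  fixes C :: "real^'k^'k"
  assumes "transpose C = C"
  shows "v \<bullet> (C *v w) = (C *v v) \<bullet> w"
  by (metis assms dot_lmul_matrix transpose_matrix_vector)

lemma sym_eig_finite:
  fixes C :: "real^'k^'k"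
  assumes sym: "transpose C = C"
  shows "finite {\<mu>. is_eigenvalue C \<mu>}"
proof -
  define S where "S = {\<mu>. is_eigenvalue C \<mu>}"
  define ev where "ev \<mu> = (SOME v. v \<noteq> 0 \<and> C *v v = \<mu> *\<^sub>R v)" for \<mu>
  have ev: "ev \<mu> \<noteq> 0 \<and> C *v ev \<mu> = \<mu> *\<^sub>R ev \<mu>" if "\<mu> \<in> S" for \<mu>
    using that unfolding S_def is_eigenvalue_def ev_def by (metis (mono_tags, lifting) mem_Collect_eq someI_ex)
  have orth: "ev \<mu> \<bullet> ev lam = 0" if "\<mu> \<in> S" "lam \<in> S" "\<mu> \<noteq> lam" for \<mu> lam
  proof -
    have "ev \<mu> \<bullet> (C *v ev lam) = (C *v ev \<mu>) \<bullet> ev lam" by (rule sym_inner[OF sym])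
    hence "lam * (ev \<mu> \<bullet> ev lam) = \<mu> * (ev \<mu> \<bullet> ev lam)" using ev that by simp
    thus ?thesis using that by simp
  qed
  have inj: "inj_on ev S"
  proof (rule inj_onI)
    fix a b assume "a \<in> S" "b \<in> S" "ev a = ev b"
    then show "a = b" using orth[of a b] ev[of a] by (metis inner_eq_zero_iff)
  qed
  have "pairwise orthogonal (ev ` S)"
    unfolding pairwise_def orthogonal_def using orth by blast
  moreover have "0 \<notin> ev ` S" using ev by auto
  ultimately have "independent (ev ` S)" by (rule pairwise_orthogonal_independent)
  hence "finite (ev ` S)" using independent_bound by blast
  thus ?thesis using inj finite_imageD unfolding S_def by blast
qed

lemma sym_eig_exists:
  fixes C :: "real^'k^'k"
  assumes sym: "transpose C = C"
  shows "\<exists>\<mu>. is_eigenvalue C \<mu>"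
proof -
  define q where "q v = v \<bullet> (C *v v)" for v :: "real^'k"
  have cont: "continuous_on (sphere 0 1) q"
    unfolding q_def by (intro continuous_intros linear_continuous_on matrix_vector_mul_linear linear_linear[THEN iffD1])
  have "sphere (0::real^'k) 1 \<noteq> {}" by simp
  then obtain v0 where v0: "v0 \<in> sphere 0 1" and min: "\<And>y. y \<in> sphere 0 1 \<Longrightarrow> q v0 \<le> q y"
    using continuous_attains_inf[OF compact_sphere _ cont] by blast
  define l where "l = q v0"
  have nv0: "norm v0 = 1" using v0 by simp
  have qs: "q (c *\<^sub>R u) = c^2 * q u" for c u
    unfolding q_def by (simp add: matrix_vector_mult_scaleR power2_eq_square)
  have ge: "q u \<ge> l * (u \<bullet> u)" for u
  proof (cases "u = 0")
    case True then show ?thesis by (simp add: q_def)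
  next
    case False
    have "(inverse (norm u)) *\<^sub>R u \<in> sphere 0 1" using False by simp
    hence "l \<le> q (inverse (norm u) *\<^sub>R u)" using min l_def by blast
    also have "\<dots> = q u / (norm u)^2" by (simp add: qs power_inverse divide_inverse mult.commute)
    finally have "l * (norm u)^2 \<le> q u" using False by (simp add: field_simps)
    thus ?thesis by (simp add: power2_norm_eq_inner)
  qed
  define r where "r = C *v v0 - l *\<^sub>R v0"
  have key: "2 * t * (w \<bullet> r) + t^2 * (q w - l * (w \<bullet> w)) \<ge> 0" for t w
  proof -
    have "q (v0 + t *\<^sub>R w) \<ge> l * ((v0 + t *\<^sub>R w) \<bullet> (v0 + t *\<^sub>R w))" by (rule ge)
    moreover have "q (v0 + t *\<^sub>R w) = q v0 + 2 * t * (w \<bullet> (C *v v0)) + t^2 * q w"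
      unfolding q_def using sym_inner[OF sym, of v0 w]
      by (simp add: matrix_vector_right_distrib matrix_vector_mult_scaleR inner_add_left inner_add_right
             algebra_simps power2_eq_square inner_commute)
    moreover have "(v0 + t *\<^sub>R w) \<bullet> (v0 + t *\<^sub>R w) = v0 \<bullet> v0 + 2 * t * (w \<bullet> v0) + t^2 * (w \<bullet> w)"
      using inner_commute[of v0 w] by (simp add: inner_add_left inner_add_right algebra_simps power2_eq_square)
    moreover have "v0 \<bullet> v0 = 1" using nv0 by (simp add: dot_square_norm)
    ultimately show ?thesis unfolding r_def l_def
      by (simp add: inner_diff_right algebra_simps inner_commute[of v0 w] power2_eq_square)
  qed
  have "r \<bullet> r = 0"
  proof (rule ccontr)
    define a where "a = r \<bullet> r"
    define b where "b = q r - l * (r \<bullet> r)"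
    assume "r \<bullet> r \<noteq> 0"
    hence a: "a > 0" unfolding a_def by (simp add: order_le_neq_trans)
    have b: "b \<ge> 0" using ge[of r] unfolding b_def by simp
    define t where "t = - a / (b + 1)"
    have "2 * t * a + t^2 * b \<ge> 0" using key[of t r] unfolding a_def b_def by simp
    moreover have "2 * t * a + t^2 * b = a^2 * (- b - 2) / (b+1)^2"
    proof -
      have bp: "b + 1 \<noteq> 0" using b by linarith
      show ?thesis unfolding t_def using bp by (simp add: divide_simps power2_eq_square) (simp add: algebra_simps)
    qed
    moreover have "a^2 * (- b - 2) / (b+1)^2 < 0" using a b
      by (intro divide_neg_pos mult_pos_neg) auto
    ultimately show False by linarith
  qed
  hence "C *v v0 = l *\<^sub>R v0" unfolding r_def by simp
  moreover have "v0 \<noteq> 0" using nv0 by auto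
  ultimately show ?thesis unfolding is_eigenvalue_def by blast
qed



lemma int_fin[simp]: "integrable (measure_pmf (p :: 'a::finite pmf)) (f :: 'a \<Rightarrow> real)"
  by (rule integrable_measure_pmf_finite) simp

definition ind :: "bool \<Rightarrow> real" where "ind b = (if b then 1 else 0)"

lemma ind_sq[simp]: "ind b * ind b = ind b" by (simp add: ind_def)

context
  fixes S :: "'a::finite set" and r :: "'a \<Rightarrow> real" and P :: "('a \<Rightarrow> bool) pmf"
  assumes r01: "\<And>s. 0 \<le> r s \<and> r s \<le> 1"
  defines "P \<equiv> Pi_pmf S False (\<lambda>s. bernoulli_pmf (r s))"
begin

lemma E_ind: "s \<in> S \<Longrightarrow> measure_pmf.expectation P (\<lambda>f. ind (f s)) = r s"
proof -
  assume s: "s \<in> S"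
  have "measure_pmf.expectation P (\<lambda>f. \<Prod>x\<in>S. (\<lambda>x v. if x = s then ind v else 1) x (f x))
     = (\<Prod>x\<in>S. measure_pmf.expectation (bernoulli_pmf (r x)) (\<lambda>v. if x = s then ind v else 1))"
    unfolding P_def by (rule expectation_prod_Pi_pmf) (auto simp: ind_def)
  also have "\<dots> = (\<Prod>x\<in>S. if x = s then r x else 1)"
    using r01 by (intro prod.cong) (auto simp: ind_def)
  finally show ?thesis using s by (simp add: prod.delta)
qed

lemma E_ind2: "s \<in> S \<Longrightarrow> t \<in> S \<Longrightarrow> s \<noteq> t \<Longrightarrow>
   measure_pmf.expectation P (\<lambda>f. ind (f s) * ind (f t)) = r s * r t"
proof -
  assume s: "s \<in> S" and t: "t \<in> S" and st: "s \<noteq> t"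
  have "measure_pmf.expectation P (\<lambda>f. \<Prod>x\<in>S. (\<lambda>x v. (if x = s then ind v else 1) * (if x = t then ind v else 1)) x (f x))
     = (\<Prod>x\<in>S. measure_pmf.expectation (bernoulli_pmf (r x)) (\<lambda>v. (if x = s then ind v else 1) * (if x = t then ind v else 1)))"
    unfolding P_def by (rule expectation_prod_Pi_pmf) (auto simp: ind_def)
  also have "\<dots> = (\<Prod>x\<in>S. (if x = s then r x else 1) * (if x = t then r x else 1))"
    using r01 st by (intro prod.cong) (auto simp: ind_def)
  finally show ?thesis using s t by (simp add: prod.delta prod.distrib)
qed

lemma E_var:
  assumes J: "finite J" and g: "inj_on g J" "g ` J \<subseteq> S"
  shows "measure_pmf.expectation P (\<lambda>f. (c + (\<Sum>j\<in>J. a j * ind (f (g j))))^2)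
     \<ge> (\<Sum>j\<in>J. (a j)^2 * (r (g j) * (1 - r (g j))))"
proof -
  define X where "X j f = ind (f (g j)) - r (g j)" for j f
  define c' where "c' = c + (\<Sum>j\<in>J. a j * r (g j))"
  have EX: "measure_pmf.expectation P (X j) = 0" if "j \<in> J" for j
    using E_ind[of "g j"] g that unfolding X_def by (simp add: image_subset_iff)
  have EXX: "measure_pmf.expectation P (\<lambda>f. X j f * X l f) = (if j = l then r (g j) * (1 - r (g j)) else 0)"
    if "j \<in> J" "l \<in> J" for j l
  proof (cases "j = l")
    case True
    have "(\<lambda>f. X j f * X l f) = (\<lambda>f. (1 - 2 * r (g j)) * ind (f (g j)) + r (g j)^2)"
      unfolding X_def True by (auto simp: algebra_simps power2_eq_square)
    then show ?thesis using E_ind[of "g j"] g that True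
      by (simp add: image_subset_iff algebra_simps power2_eq_square)
  next
    case False
    have ne: "g j \<noteq> g l" using g(1) that False by (meson inj_on_contraD)
    have "(\<lambda>f. X j f * X l f) = (\<lambda>f. ind (f (g j)) * ind (f (g l)) - r (g l) * ind (f (g j))
          - r (g j) * ind (f (g l)) + r (g j) * r (g l))"
      unfolding X_def by (auto simp: algebra_simps)
    then show ?thesis using E_ind[of "g j"] E_ind[of "g l"] E_ind2[of "g j" "g l"] g that False ne
      by (simp add: image_subset_iff algebra_simps)
  qed
  have eq: "(c + (\<Sum>j\<in>J. a j * ind (f (g j))))^2 =
     c'^2 + 2 * c' * (\<Sum>j\<in>J. a j * X j f) + (\<Sum>j\<in>J. \<Sum>l\<in>J. a j * a l * (X j f * X l f))" for f
  proof -
    have "c + (\<Sum>j\<in>J. a j * ind (f (g j))) = c' + (\<Sum>j\<in>J. a j * X j f)"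
      unfolding c'_def X_def by (simp add: algebra_simps sum.distrib sum_subtractf)
    moreover have "(\<Sum>j\<in>J. a j * X j f) * (\<Sum>j\<in>J. a j * X j f) = (\<Sum>j\<in>J. \<Sum>l\<in>J. a j * a l * (X j f * X l f))"
      by (simp add: sum_product algebra_simps)
    ultimately show ?thesis by (simp add: power2_eq_square algebra_simps)
  qed
  have "measure_pmf.expectation P (\<lambda>f. (c + (\<Sum>j\<in>J. a j * ind (f (g j))))^2)
     = c'^2 + 2 * c' * (\<Sum>j\<in>J. a j * measure_pmf.expectation P (X j))
       + (\<Sum>j\<in>J. \<Sum>l\<in>J. a j * a l * measure_pmf.expectation P (\<lambda>f. X j f * X l f))"
    unfolding eq by (simp add: integral_sum)
  also have "\<dots> = c'^2 + (\<Sum>j\<in>J. (a j)^2 * (r (g j) * (1 - r (g j))))"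
  proof -
    have "(\<Sum>l\<in>J. a j * a l * measure_pmf.expectation P (\<lambda>f. X j f * X l f)) = (a j)^2 * (r (g j) * (1 - r (g j)))"
      if "j \<in> J" for j
    proof -
      have "(\<Sum>l\<in>J. a j * a l * measure_pmf.expectation P (\<lambda>f. X j f * X l f))
          = (\<Sum>l\<in>J. if j = l then a j * a l * (r (g j) * (1 - r (g j))) else 0)"
        using EXX[OF that] by (intro sum.cong) auto
      also have "\<dots> = (a j)^2 * (r (g j) * (1 - r (g j)))" using that J by (simp add: power2_eq_square)
      finally show ?thesis .
    qed
    then show ?thesis using EX by simp
  qed
  finally show ?thesis by simp
qed

end


lemma if01_mult[simp]: "(if P then 1 else 0) * (y::real) = (if P then y else 0)" by simp
lemma if01_mult2[simp]: "(y::real) * (if P then 1 else 0) = (if P then y else 0)" by simp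

lemma if0_mult[simp]: "(if P then a else 0) * (y::real) = (if P then a * y else 0)" by simp

lemma sbmP: "sbm_P psi B $ i $ j = B $ psi i $ psi j"
  unfolding sbm_P_def matrix_matrix_mult_def memb_mat_def transpose_def
  by (simp add: cong: if_cong)

lemma Zv: "(memb_mat psi *v v) $ j = v $ psi j"
  unfolding memb_mat_def matrix_vector_mult_def by (simp add: cong: if_cong)

lemma Mv: "(M_mat psi x A k *v v) $ i = (if psi i = k then (\<Sum>j\<in>UNIV. x$j * A$i$j * v$(psi j)) else 0)"
  unfolding M_mat_def
  by (simp add: matrix_vector_mul_assoc[symmetric] Zv)
     (simp add: matrix_vector_mult_def diag_vec_def hadamard_def ones_outer_def column_def memb_mat_def
        cong: if_cong)

lemma Hquad: "v \<bullet> (H_mat psi x A k *v v) = (\<Sum>i\<in>UNIV. ((M_mat psi x A k *v v) $ i)^2)"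
proof -
  have "v \<bullet> (H_mat psi x A k *v v) = (M_mat psi x A k *v v) \<bullet> (M_mat psi x A k *v v)"
    unfolding H_mat_def matrix_vector_mul_assoc[symmetric]
    by (metis dot_lmul_matrix vector_transpose_matrix)
  thus ?thesis by (simp add: inner_vec_def power2_eq_square)
qed

lemma Equad: "v \<bullet> (mat_expectation p F *v v) = measure_pmf.expectation p (\<lambda>\<omega>. v \<bullet> (F \<omega> *v v))"
  for p :: "'a::finite pmf" and F :: "'a \<Rightarrow> real^'k^'k"
  by (simp add: inner_vec_def matrix_vector_mult_def mat_expectation_def integral_sum sum_distrib_left
       algebra_simps)



theorem mainTheorem3:
  fixes psi :: "'n::{finite,linorder} \<Rightarrow> 'k::finite"
    and B :: "real^'k^'k" and x :: "(real, 'n) vec" and k :: 'k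
  assumes n2: "CARD('n) \<ge> 2"
    and nonempty: "\<And>k'. comm_size psi k' \<ge> 1"
    and B_sym: "transpose B = B"
    and B_range: "\<And>a b. 0 \<le> B $ a $ b \<and> B $ a $ b \<le> 1"
  shows "lambda_min (mat_expectation (sbm_edges psi B) (\<lambda>e. H_mat psi x (adj_of e) k))
         \<ge> Min (range (\<lambda>k'. B $ k' $ k * (1 - B $ k' $ k) * (real (comm_size psi k) - 1)
                   * (norm (comm_restrict psi k' x))\<^sup>2))"
proof -
  define tt where "tt k' = B $ k' $ k * (1 - B $ k' $ k) * (real (comm_size psi k) - 1)
                   * (norm (comm_restrict psi k' x))\<^sup>2" for k'
  define m where "m = Min (range tt)"
  have m_le: "m \<le> tt c" for c unfolding m_def by (rule Min_le) auto
  define S where "S = {(i::'n, j). i < j}"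
  define r where "r s = B $ psi (fst s) $ psi (snd s)" for s
  define P where "P = sbm_edges psi B"
  have Bs: "B $ a $ b = B $ b $ a" for a b
    using B_sym by (metis transpose_def vec_lambda_beta)
  have r01: "\<And>s. 0 \<le> r s \<and> r s \<le> 1" unfolding r_def using B_range by blast
  have P_eq: "P = Pi_pmf S False (\<lambda>s. bernoulli_pmf (r s))"
    unfolding P_def sbm_edges_def S_def r_def by (simp add: sbmP case_prod_unfold)
  define C where "C = mat_expectation P (\<lambda>e. H_mat psi x (adj_of e) k)"
  have symC: "transpose C = C"
    unfolding C_def mat_expectation_def transpose_def H_mat_def
    by (simp add: vec_eq_iff matrix_matrix_mult_def mult.commute)
  have quad: "v \<bullet> (C *v v) \<ge> m * (v \<bullet> v)" for v
  proof -
    define a where "a j = x$j * v$(psi j)" for j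
    define ed where "ed i j = (if i < j then (i,j) else (j,i))" for i j :: 'n
    define be where "be c = B$c$k * (1 - B$c$k)" for c
    define w where "w j = (a j)^2 * be (psi j)" for j
    define M where "M e = M_mat psi x (adj_of e) k" for e
    have w0: "w j \<ge> 0" for j unfolding w_def be_def using B_range[of "psi j" k] by simp
    have A: "v \<bullet> (C *v v) = (\<Sum>i\<in>UNIV. measure_pmf.expectation P (\<lambda>e. ((M e *v v) $ i)^2))"
      unfolding C_def Equad Hquad M_def by (simp add: integral_sum)
    have Bst: "measure_pmf.expectation P (\<lambda>e. ((M e *v v) $ i)^2) \<ge>
               (if psi i = k then (\<Sum>j\<in>UNIV - {i}. w j) else 0)" for i
    proof (cases "psi i = k")
      case False
      then show ?thesis unfolding M_def Mv by simp
    next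
      case True
      have Mi: "(M e *v v) $ i = a i + (\<Sum>j\<in>UNIV - {i}. a j * ind (e (ed i j)))" for e
      proof -
        have "(M e *v v) $ i = (\<Sum>j\<in>UNIV. a j * adj_of e $ i $ j)"
          unfolding M_def Mv a_def using True by (simp add: algebra_simps)
        also have "\<dots> = a i * adj_of e $ i $ i + (\<Sum>j\<in>UNIV - {i}. a j * adj_of e $ i $ j)"
          by (simp add: sum.remove)
        also have "\<dots> = a i + (\<Sum>j\<in>UNIV - {i}. a j * ind (e (ed i j)))"
          by (intro arg_cong2[where f="(+)"] sum.cong) (auto simp: adj_of_def ind_def ed_def)
        finally show ?thesis .
      qed
      have inj: "inj_on (ed i) (UNIV - {i})"
        unfolding ed_def by (rule inj_onI) (auto split: if_splits)
      have sub: "ed i ` (UNIV - {i}) \<subseteq> S"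
        unfolding ed_def S_def by auto
      have "measure_pmf.expectation P (\<lambda>e. ((M e *v v) $ i)^2)
         \<ge> (\<Sum>j\<in>UNIV - {i}. (a j)^2 * (r (ed i j) * (1 - r (ed i j))))"
        unfolding Mi P_eq by (rule E_var[OF r01 _ inj sub]) simp
      also have "(\<Sum>j\<in>UNIV - {i}. (a j)^2 * (r (ed i j) * (1 - r (ed i j)))) = (\<Sum>j\<in>UNIV - {i}. w j)"
        unfolding w_def be_def r_def ed_def using True Bs by (intro sum.cong) auto
      finally show ?thesis using True by simp
    qed
    have Cst: "(\<Sum>i\<in>UNIV. (if psi i = k then (\<Sum>j\<in>UNIV - {i}. w j) else 0))
               \<ge> (real (comm_size psi k) - 1) * (\<Sum>j\<in>UNIV. w j)"
    proof -
      have "(\<Sum>i\<in>UNIV. (if psi i = k then (\<Sum>j\<in>UNIV - {i}. w j) else 0))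
          = (\<Sum>i\<in>{i. psi i = k}. (\<Sum>j\<in>UNIV. w j) - w i)"
        by (simp add: sum.If_cases sum_diff1)
      also have "\<dots> = real (comm_size psi k) * (\<Sum>j\<in>UNIV. w j) - (\<Sum>i\<in>{i. psi i = k}. w i)"
        by (simp add: sum_subtractf comm_size_def)
      finally have e1: "(\<Sum>i\<in>UNIV. (if psi i = k then (\<Sum>j\<in>UNIV - {i}. w j) else 0))
          = real (comm_size psi k) * (\<Sum>j\<in>UNIV. w j) - (\<Sum>i\<in>{i. psi i = k}. w i)" .
      have "(\<Sum>i\<in>{i. psi i = k}. w i) \<le> (\<Sum>j\<in>UNIV. w j)"
        by (rule sum_mono2) (auto simp: w0)
      then show ?thesis unfolding e1 by (simp add: algebra_simps)
    qed
    have Dst: "(real (comm_size psi k) - 1) * (\<Sum>j\<in>UNIV. w j) = (\<Sum>c\<in>UNIV. (v$c)^2 * tt c)"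
    proof -
      have N: "(norm (comm_restrict psi c x))\<^sup>2 = (\<Sum>j\<in>UNIV. if psi j = c then (x$j)^2 else 0)" for c
        unfolding power2_norm_eq_inner inner_vec_def comm_restrict_def
        by (intro sum.cong) (auto simp: power2_eq_square)
      have "(\<Sum>c\<in>UNIV. (v$c)^2 * be c * (\<Sum>j\<in>UNIV. if psi j = c then (x$j)^2 else 0))
          = (\<Sum>j\<in>UNIV. \<Sum>c\<in>UNIV. if c = psi j then (v$c)^2 * be c * (x$j)^2 else 0)"
        by (subst sum.swap) (simp add: sum_distrib_left if_distrib eq_commute cong: if_cong)
      also have "\<dots> = (\<Sum>j\<in>UNIV. w j)"
        unfolding w_def a_def power_mult_distrib
        by (simp del: if01_mult if01_mult2) (intro sum.cong refl, simp only: mult_ac)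
      finally have "(\<Sum>j\<in>UNIV. w j) = (\<Sum>c\<in>UNIV. (v$c)^2 * be c * (norm (comm_restrict psi c x))\<^sup>2)"
        by (simp add: N)
      then show ?thesis unfolding tt_def be_def
        by (simp only: sum_distrib_left) (intro sum.cong refl, simp only: mult_ac)
    qed
    have Est: "(\<Sum>c\<in>UNIV. (v$c)^2 * tt c) \<ge> m * (v \<bullet> v)"
    proof -
      have "m * (v \<bullet> v) = (\<Sum>c\<in>UNIV. (v$c)^2 * m)"
        by (simp add: inner_vec_def sum_distrib_left power2_eq_square algebra_simps)
      also have "\<dots> \<le> (\<Sum>c\<in>UNIV. (v$c)^2 * tt c)"
        by (intro sum_mono mult_left_mono m_le) simp
      finally show ?thesis .
    qed
    have "(\<Sum>i\<in>UNIV. (if psi i = k then (\<Sum>j\<in>UNIV - {i}. w j) else 0)) \<le> v \<bullet> (C *v v)"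
      unfolding A by (rule sum_mono) (rule Bst)
    then show ?thesis using Cst Dst Est by linarith
  qed
  have ev_ge: "m \<le> \<mu>" if ev: "is_eigenvalue C \<mu>" for \<mu>
  proof -
    obtain v where v: "v \<noteq> 0" "C *v v = \<mu> *\<^sub>R v" using ev unfolding is_eigenvalue_def by blast
    have "v \<bullet> (C *v v) = \<mu> * (v \<bullet> v)" using v(2) by simp
    then have 1: "m * (v \<bullet> v) \<le> \<mu> * (v \<bullet> v)" using quad[of v] by linarith
    have 2: "0 < v \<bullet> v" using v(1) by (rule inner_gt_zero_iff[THEN iffD2])
    show ?thesis using 1 2 by (rule mult_right_le_imp_le)
  qed
  have fin: "finite {\<mu>. is_eigenvalue C \<mu>}" by (rule sym_eig_finite[OF symC])
  have ne: "{\<mu>. is_eigenvalue C \<mu>} \<noteq> {}" using sym_eig_exists[OF symC] by blast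
  have "m \<le> lambda_min C"
    unfolding lambda_min_def by (rule Min.boundedI[OF fin ne]) (simp add: ev_ge)
  then show ?thesis unfolding C_def P_def m_def tt_def .
qed

end
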